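(* For all complex $y$, $$\sum_{n=0}^{\infty}\binom{2n}{n}\frac{1}{2^n}R_n(y)=e^{y}\sum_{n=0}^{\infty}\frac{y^{2n+1}}{4^n(n!)^2(2n+1)}=e^{y}\left(yI_0(y)+\frac{\pi y}{2}\big[I_0(y)\mathbf{L}_1(y)-I_1(y)\mathbf{L}_0(y)\big]\right).$$
   Context: For an integer $n\ge 0$ and complex $y$, $R_n(y)=e^y-1-\frac{y}{1!}-\frac{y^2}{2!}-\dots-\frac{y^n}{n!}=e^y-\sum_{k=0}^n\frac{y^k}{k!}$. $I_0(z)=\sum_{n\ge0}\frac{z^{2n}}{4^n(n!)^2}$ and $I_1=I_0'$ are the modified Bessel functions of the first kind; $\mathbf{L}_0,\mathbf{L}_1$ are the modified Struve functions of orders $0$ and $1$. *)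

theory Defs
  imports "HOL-Analysis.Analysis"
begin

definition expR :: "nat \<Rightarrow> complex \<Rightarrow> complex" where
  "expR n y = exp y - (\<Sum>k\<le>n. y ^ k / of_nat (fact k))"

definition besselI0 :: "complex \<Rightarrow> complex" where
  "besselI0 z = (\<Sum>n. z ^ (2*n) / (4 ^ n * of_nat (fact n) ^ 2))"

definition besselI1 :: "complex \<Rightarrow> complex" where
  "besselI1 z = (\<Sum>k. (z/2) ^ (2*k+1) / (of_nat (fact k) * of_nat (fact (k+1))))"

definition struveL0 :: "complex \<Rightarrow> complex" where
  "struveL0 z = (\<Sum>k. (z/2) ^ (2*k+1) /
      complex_of_real (Gamma (real k + 3/2) * Gamma (real k + 3/2)))"

definition struveL1 :: "complex \<Rightarrow> complex" where
  "struveL1 z = (\<Sum>k. (z/2) ^ (2*k+2) /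
      complex_of_real (Gamma (real k + 3/2) * Gamma (real k + 5/2)))"

end

theory Submission
  imports Defs
begin


lemma Gamma_rec: "(x::real) > 0 \<Longrightarrow> Gamma (x + 1) = x * Gamma x"
  by (rule Gamma_plus1) (auto dest: nonpos_Ints_nonpos)

lemma Gamma32: "Gamma (3/2::real) = sqrt pi / 2"
proof -
  have "Gamma (1/2 + 1::real) = 1/2 * Gamma (1/2)" by (rule Gamma_rec) simp
  thus ?thesis by (simp add: Gamma_one_half_real)
qed

lemma four_pow: "(4::complex)^k = (2^k)^2"
proof -
  have "(2^k)^2 = ((2::complex)^2)^k" by (simp only: power_mult[symmetric] mult.commute)
  thus ?thesis by simp
qed

lemma nz2 [simp]: "(1 + of_nat k * 2 :: complex) \<noteq> 0" "(fact k + fact k * of_nat k :: complex) \<noteq> 0"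
proof -
  have "(1 + of_nat k * 2 :: complex) = of_nat (1 + k*2)" by simp
  thus "(1 + of_nat k * 2 :: complex) \<noteq> 0" by (simp only: of_nat_eq_0_iff; simp)
  have "(fact k + fact k * of_nat k :: complex) = fact k * of_nat (Suc k)" by (simp add: algebra_simps)
  thus "(fact k + fact k * of_nat k :: complex) \<noteq> 0" by (simp only: of_nat_eq_0_iff mult_eq_0_iff; simp)
qed

lemma nz3 [simp]: "(3 + of_nat k * 2 :: complex) \<noteq> 0"
proof -
  have "(3 + of_nat k * 2 :: complex) = of_nat (3 + k*2)" by simp
  thus ?thesis by (simp only: of_nat_eq_0_iff; simp)
qed

lemma nz1 [simp]: "(1 + of_nat k :: complex) \<noteq> 0" "(of_nat k + 1 :: complex) \<noteq> 0"
  by (metis of_nat_Suc of_nat_eq_0_iff nat.distinct(1) add.commute)+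


definition i0c :: "nat \<Rightarrow> complex" where
  "i0c n = (if even n then 1 / (4 ^ (n div 2) * of_nat (fact (n div 2)) ^ 2) else 0)"
definition i1c :: "nat \<Rightarrow> complex" where
  "i1c n = (if odd n then (1/2) ^ n / (of_nat (fact (n div 2)) * of_nat (fact (n div 2 + 1))) else 0)"
definition l0c :: "nat \<Rightarrow> complex" where
  "l0c n = (if odd n then (1/2) ^ n / complex_of_real (Gamma (real (n div 2) + 3/2) * Gamma (real (n div 2) + 3/2)) else 0)"
definition l1c :: "nat \<Rightarrow> complex" where
  "l1c n = (if even n \<and> n \<noteq> 0 then (1/2) ^ n / complex_of_real (Gamma (real (n div 2 - 1) + 3/2) * Gamma (real (n div 2 - 1) + 5/2)) else 0)"
definition sc :: "nat \<Rightarrow> complex" where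
  "sc n = (if odd n then 1 / (4 ^ (n div 2) * of_nat (fact (n div 2)) ^ 2 * of_nat n) else 0)"

lemma parity_cases: fixes n :: nat obtains k where "n = 2*k" | k where "n = 2*k+1"
  by (metis evenE oddE)

lemma rel_i0: "of_nat (n+1) * i0c (n+1) = i1c n"
proof (cases n rule: parity_cases)
  case (1 k) thus ?thesis by (simp add: i0c_def i1c_def)
next
  case (2 k)
  hence "(n+1) div 2 = k+1" "n div 2 = k" by auto
  with 2 show ?thesis 
    by (simp add: i0c_def i1c_def power_mult power_divide four_pow divide_simps) (simp add: algebra_simps power2_eq_square)
qed

lemma rel_i1: "of_nat (m+2) * i1c (m+1) = i0c m"
proof (cases m rule: parity_cases)
  case (1 k)
  hence "(m+1) div 2 = k" "m div 2 = k" by auto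
  with 1 show ?thesis 
    by (simp add: i0c_def i1c_def power_mult power_divide four_pow divide_simps) (simp add: algebra_simps power2_eq_square)
next
  case (2 k) thus ?thesis by (simp add: i0c_def i1c_def)
qed

lemma rel_s: "of_nat (n+1) * sc (n+1) = i0c n"
proof (cases n rule: parity_cases)
  case (1 k)
  hence "(n+1) div 2 = k" "n div 2 = k" by auto
  with 1 show ?thesis 
    by (simp add: i0c_def sc_def divide_simps) (simp add: algebra_simps)
next
  case (2 k) thus ?thesis by (simp add: i0c_def sc_def)
qed

lemma Gpos: "Gamma (real k + 3/2) > 0" "Gamma (real k + 5/2) > 0"
  by (rule Gamma_real_pos; simp add: add_nonneg_pos)+

lemma G52: "Gamma (real k + 5/2) = (real k + 3/2) * Gamma (real k + 3/2)"
proof -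
  have "Gamma (real k + 3/2 + 1) = (real k + 3/2) * Gamma (real k + 3/2)"
    by (rule Gamma_rec) (simp add: add_nonneg_pos)
  moreover have "real k + 3/2 + 1 = real k + 5/2" by simp
  ultimately show ?thesis by simp
qed

lemma rel_l0: "of_nat (n+1) * l0c (n+1) = (if n = 0 then complex_of_real (2/pi) else 0) + l1c n"
proof (cases "n = 0")
  case True
  have r: "(1/2) / (sqrt pi/2 * (sqrt pi/2)) = 2/pi"
    by (simp add: field_simps)
  have "l0c 1 = complex_of_real ((1/2) / (sqrt pi/2 * (sqrt pi/2)))"
    by (simp add: l0c_def Gamma32)
  hence "l0c 1 = complex_of_real (2/pi)" by (simp only: r)
  thus ?thesis using True by (simp add: l1c_def)
next
  case False
  show ?thesis
  proof (cases n rule: parity_cases)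
    case (1 j)
    with False obtain k where k: "n = 2*k+2" by (cases j) auto
    hence "(n+1) div 2 = k+1" "n div 2 - 1 = k" by auto
    moreover have "odd (n+1)" "even n" "n \<noteq> 0" using k by auto
    ultimately have e0: "l0c (n+1) = (1/2)^(n+1) / complex_of_real (Gamma (real (k+1) + 3/2) * Gamma (real (k+1) + 3/2))"
      "l1c n = (1/2)^n / complex_of_real (Gamma (real k + 3/2) * Gamma (real k + 5/2))"
      by (simp_all only: l0c_def l1c_def if_True simp_thms)
    have rr: "real (k+1) + 3/2 = real k + 5/2" by simp
    note e = e0[unfolded rr]
    define G where "G = Gamma (real k + 3/2)"
    have gp: "G > 0" using Gpos[of k] by (simp add: G_def)
    show ?thesis using False gp k unfolding e G52 G_def[symmetric]
      by (simp add: divide_simps; simp add: algebra_simps)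
  next
    case (2 k) thus ?thesis by (simp add: l0c_def l1c_def)
  qed
qed

lemma rel_l1: "of_nat (m+2) * l1c (m+1) = l0c m"
proof (cases m rule: parity_cases)
  case (1 k) thus ?thesis by (simp add: l0c_def l1c_def)
next
  case (2 k)
  hence "(m+1) div 2 - 1 = k" "m div 2 = k" by auto
  hence e: "l1c (m+1) = (1/2)^(2*k+2) / complex_of_real (Gamma (real k + 3/2) * Gamma (real k + 5/2))"
      "l0c m = (1/2)^(2*k+1) / complex_of_real (Gamma (real k + 3/2) * Gamma (real k + 3/2))"
      using 2 by (simp_all add: l0c_def l1c_def)
  define G where "G = Gamma (real k + 3/2)"
  have gp: "G > 0" using Gpos[of k] by (simp add: G_def)
  show ?thesis using gp 2 unfolding e G52 G_def[symmetric]
      by (simp add: divide_simps; simp add: algebra_simps)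
qed

definition bc :: "nat \<Rightarrow> complex" where "bc n = of_nat (2*n choose n) / 2 ^ n"
definition qc :: "nat \<Rightarrow> complex" where "qc n = bc n / fact n"
definition tc :: "nat \<Rightarrow> complex" where "tc n = (\<Sum>m<n. bc m) / fact n"

lemma central: "(k+1) * (2*k+2 choose (k+1)) = 2*(2*k+1)*(2*k choose k)"
proof -
  have a: "(k+1) * (2*k+2 choose (k+1)) = (2*k+2) * (2*k+1 choose k)"
    using Suc_times_binomial[of k "2*k+1"] by (simp del: binomial_Suc_Suc)
  have b: "(k+1) * (2*k+1 choose (k+1)) = (2*k+1) * (2*k choose k)"
    using Suc_times_binomial[of k "2*k"] by (simp del: binomial_Suc_Suc)
  have c: "(2*k+1 choose k) = (2*k+1 choose (k+1))"
    using binomial_symmetric[of k "2*k+1"] by simp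
  have "(k+1) * ((k+1) * (2*k+2 choose (k+1))) = (2*k+2) * ((k+1) * (2*k+1 choose (k+1)))"
    unfolding a c by simp
  also have "\<dots> = (k+1) * (2*(2*k+1)*(2*k choose k))" unfolding b by simp
  finally show ?thesis by (subst (asm) mult_cancel1) simp
qed

lemma rel_b: "of_nat (k+1) * bc (k+1) = of_nat (2*k+1) * bc k"
proof -
  have "of_nat (k+1) * bc (k+1) = of_nat ((k+1) * (2*k+2 choose (k+1))) / 2^(k+1)"
    by (simp add: bc_def algebra_simps del: binomial_Suc_Suc)
  also have "\<dots> = of_nat (2*(2*k+1)*(2*k choose k)) / 2^(k+1)"
    by (simp only: central)
  also have "\<dots> = of_nat (2*k+1) * bc k"
    by (simp add: bc_def divide_simps del: binomial_Suc_Suc; simp add: algebra_simps)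
  finally show ?thesis .
qed

lemma rel_q: "(of_nat (k+1))^2 * qc (k+1) = of_nat (2*k+1) * qc k"
proof -
  have "(of_nat (k+1))^2 * qc (k+1) = (of_nat (k+1) * bc (k+1)) / fact k"
    by (simp add: qc_def power2_eq_square divide_simps)
  also have "\<dots> = of_nat (2*k+1) * qc k" by (simp only: rel_b) (simp add: qc_def)
  finally show ?thesis .
qed

lemma rel_t: "of_nat (k+1) * tc (k+1) - tc k = qc k"
  by (simp add: tc_def qc_def divide_simps)



lemma summable_bound:
  fixes a :: "nat \<Rightarrow> complex"
  assumes b: "\<And>n. norm (a n) * fact n \<le> M * C ^ n" and C: "C \<ge> 0"
  shows "summable (\<lambda>n. a n * w ^ n)"
proof (rule summable_comparison_test')
  show "summable (\<lambda>n. M * (inverse (fact n) * (C * norm w) ^ n))"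
    by (intro summable_mult summable_exp)
  fix n :: nat
  have "norm (a n * w ^ n) = norm (a n) * norm w ^ n" by (simp add: norm_mult norm_power)
  also have "\<dots> \<le> (M * C ^ n / fact n) * norm w ^ n"
    using b[of n] by (intro mult_right_mono) (simp_all add: field_simps)
  also have "\<dots> = M * (inverse (fact n) * (C * norm w) ^ n)"
    by (simp add: field_simps power_mult_distrib)
  finally show "norm (a n * w ^ n) \<le> M * (inverse (fact n) * (C * norm w) ^ n)" .
qed

lemma fb0: "fact (2*k) \<le> (4::real)^k * fact k ^ 2"
proof -
  have "fact k * fact (2*k - k) * (2*k choose k) = (fact (2*k) :: nat)"
    by (rule binomial_fact_lemma) simp
  moreover have "(2*k choose k) \<le> 4^k"
    using binomial_le_pow2[of "2*k" k] by (simp add: power_mult)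
  ultimately have "(fact (2*k) :: nat) \<le> fact k * fact k * 4^k"
    by (metis mult_le_mono2 mult.assoc mult_2 add_diff_cancel_right')
  hence "real (fact (2*k)) \<le> real (fact k * fact k * 4^k)" by (simp only: of_nat_le_iff)
  thus ?thesis by (simp add: power2_eq_square mult_ac)
qed

lemma fb1: "fact (2*k+1) \<le> 2 * (4::real)^k * fact k * fact (k+1)"
proof -
  have "fact k * fact (2*k+1 - k) * (2*k+1 choose k) = (fact (2*k+1) :: nat)"
    by (rule binomial_fact_lemma) simp
  moreover have "(2*k+1 choose k) \<le> 2*4^k"
    using binomial_le_pow2[of "2*k+1" k] by (simp add: power_mult)
  moreover have "2*k+1-k = k+1" by simp
  ultimately have "(fact (2*k+1) :: nat) \<le> fact k * fact (k+1) * (2*4^k)"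
    by (metis mult_le_mono2)
  hence "real (fact (2*k+1)) \<le> real (fact k * fact (k+1) * (2*4^k))" by (simp only: of_nat_le_iff)
  thus ?thesis by (simp only: of_nat_mult of_nat_fact of_nat_power of_nat_numeral) (simp add: mult_ac del: fact_Suc)
qed

lemma fb2: "fact (2*k+2) \<le> 4 * (4::real)^k * fact (k+1) ^ 2"
  using fb0[of "k+1"] by (simp add: algebra_simps)

lemma Gamma_lb: "Gamma (real k + 3/2) \<ge> fact k / 2"
proof (induction k)
  case 0
  have "1 \<le> sqrt pi" using pi_gt3 by simp
  thus ?case by (simp add: Gamma32)
next
  case (Suc k)
  have "Gamma (real (Suc k) + 3/2) = Gamma ((real k + 3/2) + 1)" by (simp add: algebra_simps)
  also have "\<dots> = (real k + 3/2) * Gamma (real k + 3/2)" by (rule Gamma_rec) (simp add: add_nonneg_pos)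
  also have "\<dots> \<ge> (real k + 1) * (fact k / 2)"
    using Suc.IH by (intro mult_mono) auto
  finally show ?case by (simp add: algebra_simps)
qed

lemma four_pow_r: "((2::real)^k)^2 = 4^k"
proof -
  have "((2::real)^k)^2 = ((2::real)^2)^k" by (simp only: power_mult[symmetric] mult.commute)
  thus ?thesis by simp
qed

lemma canc: "(b::real) \<noteq> 0 \<Longrightarrow> 1 / (A * b) * (b * c) = c / A"
  by (simp add: field_simps)

lemma cmod_odd [simp]: "cmod (1 + 2 * complex_of_nat k) = 2 * real k + 1"
proof -
  have "1 + 2 * complex_of_nat k = of_nat (2*k+1)" by simp
  thus ?thesis by (simp only: norm_of_nat; simp)
qed

lemma bnd_i0: "norm (i0c n) * fact n \<le> 1 * 1 ^ n"
proof (cases n rule: parity_cases)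
  case (1 k)
  hence "norm (i0c n) * fact n = fact (2*k) / (4^k * fact k ^ 2)" by (simp add: i0c_def norm_divide norm_mult norm_power)
  thus ?thesis using fb0[of k] by (simp add: pos_divide_le_eq)
next
  case (2 k) thus ?thesis by (simp add: i0c_def)
qed

lemma bnd_i1: "norm (i1c n) * fact n \<le> 1 * 1 ^ n"
proof (cases n rule: parity_cases)
  case (2 k)
  hence "norm (i1c n) * fact n = fact (2*k+1) / (2 * 4^k * fact k * fact (k+1))"
    by (simp add: i1c_def norm_divide norm_mult norm_power power_mult field_simps four_pow_r del: fact_Suc)
  thus ?thesis using fb1[of k] by (simp add: pos_divide_le_eq del: fact_Suc)
next
  case (1 k) thus ?thesis by (simp add: i1c_def)
qed

lemma bnd_s: "norm (sc n) * fact n \<le> 1 * 1 ^ n"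
proof (cases n rule: parity_cases)
  case (2 k)
  hence "sc n = complex_of_real (1 / (4^k * fact k ^2 * (2*real k+1)))"
    by (simp add: sc_def)
  hence "norm (sc n) = 1 / (4^k * fact k ^2 * (2*real k+1))" by (simp only: norm_of_real) simp
  moreover have "fact n = (2*real k+1) * fact (2*k)" using 2 by simp
  ultimately have "norm (sc n) * fact n = fact (2*k) / (4^k * fact k ^ 2)" 
    using canc[of "2*real k+1" "4^k * fact k ^2" "fact (2*k)"] by (simp only:; simp)
  thus ?thesis using fb0[of k] by (simp add: pos_divide_le_eq)
next
  case (1 k) thus ?thesis by (simp add: sc_def)
qed

lemma keyl:
  fixes a b A B N Q c P :: real
  assumes "0<a" "0<b" "0 \<le> A" "0 \<le> B" "A \<le> 2*a" "B \<le> 2*b" "N \<le> Q*A*B*c" "c \<le> Q" "Q*P=1" "0 \<le> P" "0\<le>c"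
  shows "P/(a*b) * N \<le> 4*Q"
proof -
  have "P*N \<le> P*(Q*A*B*c)" using assms by (intro mult_left_mono) auto
  also have "\<dots> = (Q*P)*(A*B)*c" by (simp add: mult_ac)
  also have "\<dots> = A*B*c" using assms by simp
  also have "\<dots> \<le> (2*a)*(2*b)*c" using assms by (intro mult_right_mono mult_mono) auto
  also have "\<dots> \<le> (2*a)*(2*b)*Q" using assms by (intro mult_left_mono) auto
  finally have "P*N \<le> (a*b)*(4*Q)" by (simp add: mult_ac)
  hence "P*N/(a*b) \<le> 4*Q" using assms by (simp add: pos_divide_le_eq mult_ac)
  thus ?thesis by simp
qed

lemma kle: "real k + 1 \<le> 2 ^ (2*k+1)"
proof -
  have "k + 1 \<le> 2^(2*k+1)"
  proof -
    have "k < 2^k" by (rule less_exp)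
    also have "(2::nat)^k \<le> 2^(2*k)" by (intro power_increasing) auto
    finally show ?thesis by simp
  qed
  hence "real (k+1) \<le> real (2^(2*k+1))" by (simp only: of_nat_le_iff)
  thus ?thesis by simp
qed

lemma bnd_l0: "norm (l0c n) * fact n \<le> 4 * 2 ^ n"
proof (cases n rule: parity_cases)
  case (2 k)
  define G where "G = Gamma (real k + 3/2)"
  have G: "fact k / 2 \<le> G" "0 < G" using Gamma_lb[of k] Gpos[of k] by (simp_all add: G_def)
  have "l0c n = complex_of_real ((1/2)^n / (G*G))" using 2 by (simp add: l0c_def G_def)
  hence nn: "norm (l0c n) = (1/2)^n / (G*G)" by (simp only: norm_of_real; simp)
  have "fact n \<le> 2^n * fact k * fact k * (real k + 1)"
  proof -
    have fs: "fact (k+1) = (real k + 1) * (fact k::real)" by simp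
    have "fact n \<le> (2 * 4 ^ k * fact k * fact (k+1) :: real)" using fb1[of k] 2 by simp
    also have "\<dots> = 2^n * fact k * fact k * (real k + 1)"
      unfolding fs 2 using four_pow_r[of k] by (simp add: power_add power_mult mult_ac)
    finally show ?thesis .
  qed
  moreover have "real k + 1 \<le> 2^n" using kle[of k] 2 by simp
  moreover have "(2::real)^n * (1/2)^n = 1" by (simp flip: power_mult_distrib)
  moreover have "fact k \<le> 2 * G" using G(1) by linarith
  ultimately have "(1/2)^n / (G*G) * fact n \<le> 4 * 2^n"
    using G(2) by (intro keyl[where A="fact k" and B="fact k" and c="real k + 1"]) simp_all
  thus ?thesis using nn by simp
next
  case (1 k) thus ?thesis by (simp add: l0c_def)
qed

lemma bnd_l1: "norm (l1c n) * fact n \<le> 4 * 2 ^ n"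
proof (cases "odd n \<or> n = 0")
  case True thus ?thesis by (auto simp add: l1c_def)
next
  case False
  define k where "k = n div 2 - 1"
  have k: "n = 2*k+2" using False unfolding k_def by (auto elim!: evenE)
  define G where "G = Gamma (real k + 3/2)"
  define G' where "G' = Gamma (real k + 5/2)"
  have rr: "real (k+1) + 3/2 = real k + 5/2" by simp
  have G: "fact k / 2 \<le> G" "0 < G" using Gamma_lb[of k] Gpos[of k] by (simp_all add: G_def)
  have G': "fact (k+1) / 2 \<le> G'" "0 < G'" using Gamma_lb[of "k+1"] Gpos[of k] by (simp_all only: G'_def rr)
  have "even n" "n \<noteq> 0" "n div 2 - 1 = k" using k by auto
  hence "l1c n = complex_of_real ((1/2)^n / (G*G'))" by (simp add: l1c_def G_def G'_def)
  hence nn: "norm (l1c n) = (1/2)^n / (G*G')" using G(2) G'(2) by (simp only: norm_of_real; simp)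
  have "fact n \<le> 2^n * fact k * fact (k+1) * (real k + 1)"
  proof -
    have fs: "fact (k+1) = (real k + 1) * (fact k::real)" by simp
    have "fact n \<le> (4 * 4 ^ k * fact (k+1) ^ 2 :: real)" using fb2[of k] k by simp
    also have "\<dots> = 2^n * fact k * fact (k+1) * (real k + 1)"
      unfolding fs k using four_pow_r[of k] by (simp add: power_add power_mult power2_eq_square mult_ac)
    finally show ?thesis .
  qed
  moreover have "real k + 1 \<le> 2^n"
  proof -
    have "(2::real)^(2*k+1) \<le> 2^n" using k by (intro power_increasing) auto
    thus ?thesis using kle[of k] by linarith
  qed
  moreover have "(2::real)^n * (1/2)^n = 1" by (simp flip: power_mult_distrib)
  moreover have "fact k \<le> 2 * G" using G(1) by linarith
  moreover have "fact (k+1) \<le> 2 * G'" using G'(1) by linarith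
  ultimately have "(1/2)^n / (G*G') * fact n \<le> 4 * 2^n"
    using G(2) G'(2) by (intro keyl[where A="fact k" and B="fact (k+1)" and c="real k + 1"]) (simp_all del: fact_Suc)
  thus ?thesis using nn by simp
qed

lemma bnd_bc: "norm (bc m) \<le> 2 ^ m"
proof -
  have "(2*m choose m) \<le> 4^m" using binomial_le_pow2[of "2*m" m] by (simp add: power_mult)
  hence "real (2*m choose m) \<le> real (4^m)" by (simp only: of_nat_le_iff)
  hence "real (2*m choose m) \<le> 2^m * 2^m" by (simp add: power_mult_distrib[symmetric])
  moreover have "bc m = complex_of_real (real (2*m choose m) / 2^m)" by (simp add: bc_def)
  hence "norm (bc m) = real (2*m choose m) / 2^m" by (simp only: norm_of_real; simp)
  ultimately show ?thesis by (simp add: pos_divide_le_eq)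
qed

lemma sum_pow2: "(\<Sum>m<n. (2::real)^m) \<le> 2^n"
  by (induction n) auto

lemma bnd_B: "norm (\<Sum>m<n. bc m) \<le> 2^n"
proof -
  have "norm (\<Sum>m<n. bc m) \<le> (\<Sum>m<n. norm (bc m))" by (rule norm_sum)
  also have "\<dots> \<le> (\<Sum>m<n. 2^m)" by (intro sum_mono bnd_bc)
  also have "\<dots> \<le> 2^n" by (rule sum_pow2)
  finally show ?thesis .
qed

lemma bnd_t: "norm (tc n) * fact n \<le> 1 * 2 ^ n"
  using bnd_B[of n] by (simp add: tc_def norm_divide)

lemma bnd_q: "norm (qc n) * fact n \<le> 1 * 2 ^ n"
  using bnd_bc[of n] by (simp add: qc_def norm_divide)



definition "I0f = Abs_fps i0c"
definition "I1f = Abs_fps i1c"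
definition "L0f = Abs_fps l0c"
definition "L1f = Abs_fps l1c"
definition "Sf = Abs_fps sc"
definition "Qf = Abs_fps qc"
definition "Tf = Abs_fps tc"

lemma rad: assumes "\<And>w. summable (\<lambda>n. c n * w^n)" shows "fps_conv_radius (Abs_fps c) = \<infinity>"
proof -
  have "fps_nth (Abs_fps c) = c" by (rule ext) simp
  thus ?thesis unfolding fps_conv_radius_def using conv_radius_inftyI''[OF assms] by simp
qed

lemma summ: 
  "summable (\<lambda>n. i0c n * w^n)" "summable (\<lambda>n. i1c n * w^n)" "summable (\<lambda>n. l0c n * w^n)"
  "summable (\<lambda>n. l1c n * w^n)" "summable (\<lambda>n. sc n * w^n)" "summable (\<lambda>n. qc n * w^n)"
  "summable (\<lambda>n. tc n * w^n)"
  by (rule summable_bound, rule bnd_i0 bnd_i1 bnd_l0 bnd_l1 bnd_s bnd_q bnd_t, simp)+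

lemma rads [simp]: "fps_conv_radius I0f = \<infinity>" "fps_conv_radius I1f = \<infinity>" "fps_conv_radius L0f = \<infinity>"
  "fps_conv_radius L1f = \<infinity>" "fps_conv_radius Sf = \<infinity>" "fps_conv_radius Qf = \<infinity>" "fps_conv_radius Tf = \<infinity>"
  unfolding I0f_def I1f_def L0f_def L1f_def Sf_def Qf_def Tf_def by (rule rad, rule summ)+

lemma F1: "fps_deriv I0f = I1f"
  by (rule fps_ext) (simp add: I0f_def I1f_def rel_i0[simplified])

lemma F2: "fps_X * fps_deriv I1f = fps_X * I0f - I1f"
proof (rule fps_ext)
  fix n show "fps_nth (fps_X * fps_deriv I1f) n = fps_nth (fps_X * I0f - I1f) n"
  proof (cases n)
    case 0 thus ?thesis by (simp add: I0f_def I1f_def i1c_def)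
  next
    case (Suc m)
    have "of_nat (m+2) * i1c (m+1) = i0c m" by (rule rel_i1)
    thus ?thesis using Suc by (simp add: I0f_def I1f_def algebra_simps)
  qed
qed

lemma F3: "fps_deriv L0f = fps_const (complex_of_real (2/pi)) + L1f"
  by (rule fps_ext) (simp add: L0f_def L1f_def rel_l0[simplified])

lemma F4: "fps_X * fps_deriv L1f = fps_X * L0f - L1f"
proof (rule fps_ext)
  fix n show "fps_nth (fps_X * fps_deriv L1f) n = fps_nth (fps_X * L0f - L1f) n"
  proof (cases n)
    case 0 thus ?thesis by (simp add: L0f_def L1f_def l1c_def)
  next
    case (Suc m)
    have "of_nat (m+2) * l1c (m+1) = l0c m" by (rule rel_l1)
    thus ?thesis using Suc by (simp add: L0f_def L1f_def algebra_simps)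
  qed
qed

lemma F5: "fps_deriv Sf = I0f"
  by (rule fps_ext) (simp add: I0f_def Sf_def rel_s[simplified])

lemma d1: "fps_deriv (fps_X * I1f) = fps_X * I0f"
proof -
  have "fps_deriv (fps_X * I1f) = I1f + fps_X * fps_deriv I1f" by simp
  also have "\<dots> = fps_X * I0f" by (simp add: F2)
  finally show ?thesis .
qed

lemma d0: "fps_deriv (fps_X * I0f) = I0f + fps_X * I1f"
  by (simp add: F1)

lemma F6: "fps_exp 1 * I0f = Qf"
proof -
  define E :: "complex fps" where "E = fps_exp 1"
  define F where "F = E * I0f"
  have dE: "fps_deriv E = E" by (simp add: E_def)
  have a: "fps_X * fps_deriv F = E * (fps_X*I0f) + E*(fps_X*I1f)"
    by (simp add: F_def dE F1 algebra_simps)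
  have ode: "fps_deriv (fps_X * fps_deriv F) = fps_X * fps_deriv F + fps_X * fps_deriv F + F"
  proof -
    have dm: "fps_deriv (E * G) = E * G + E * fps_deriv G" for G
      by (simp add: dE algebra_simps)
    have "fps_deriv (E * (fps_X*I0f)) = E * (fps_X*I0f) + E * (I0f + fps_X * I1f)"
      by (simp only: dm d0)
    moreover have "fps_deriv (E * (fps_X*I1f)) = E * (fps_X*I1f) + E * (fps_X * I0f)"
      by (simp only: dm d1)
    ultimately show ?thesis unfolding a by (simp add: F_def algebra_simps)
  qed
  have r: "fps_nth F (Suc k) * (of_nat (k+1))^2 = of_nat (2*k+1) * fps_nth F k" for k
  proof -
    have "fps_nth (fps_deriv (fps_X * fps_deriv F)) k = fps_nth (fps_X * fps_deriv F) k + fps_nth (fps_X * fps_deriv F) k + fps_nth F k"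
      by (simp only: ode fps_add_nth)
    thus ?thesis by (cases k) (simp_all add: algebra_simps power2_eq_square)
  qed
  have "fps_nth F k = qc k" for k
  proof (induction k)
    case 0 thus ?case by (simp add: F_def E_def I0f_def qc_def bc_def i0c_def)
  next
    case (Suc k)
    have "fps_nth F (Suc k) * (of_nat (k+1))^2 = qc (Suc k) * (of_nat (k+1))^2"
      using r[of k] rel_q[of k] Suc.IH by (simp add: mult_ac)
    moreover have "(of_nat (k+1))^2 \<noteq> (0::complex)" by simp
    ultimately show ?case by simp
  qed
  thus ?thesis by (intro fps_ext) (simp add: F_def E_def Qf_def)
qed

lemma F7: "Tf = fps_exp 1 * Sf"
proof -
  define E :: "complex fps" where "E = fps_exp 1"
  define H where "H = E * Sf"
  have dE: "fps_deriv E = E" by (simp add: E_def)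
  have F6': "E * I0f = Qf" unfolding E_def by (rule F6)
  have "fps_deriv H = E * Sf + E * I0f" by (simp add: H_def dE F5 add.commute)
  hence h: "fps_deriv H - H = Qf" unfolding F6' H_def by simp
  have t: "fps_deriv Tf - Tf = Qf"
    by (rule fps_ext) (simp add: Tf_def Qf_def rel_t[simplified])
  have r: "of_nat (k+1) * fps_nth Tf (Suc k) - fps_nth Tf k = of_nat (k+1) * fps_nth H (Suc k) - fps_nth H k" for k
  proof -
    have "fps_nth (fps_deriv Tf - Tf) k = fps_nth (fps_deriv H - H) k" by (simp only: h t)
    thus ?thesis by simp
  qed
  have "fps_nth Tf k = fps_nth H k" for k
  proof (induction k)
    case 0 thus ?case by (simp add: H_def E_def Tf_def Sf_def tc_def sc_def)
  next
    case (Suc k)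
    have "of_nat (k+1) * fps_nth Tf (Suc k) = of_nat (k+1) * fps_nth H (Suc k)"
      using r[of k] Suc.IH by simp
    thus ?case by simp
  qed
  thus ?thesis by (intro fps_ext) (simp add: H_def E_def)
qed

definition "Gf = fps_X * I0f + fps_const (complex_of_real pi / 2) * (fps_X * (I0f * L1f - I1f * L0f))"

lemma F8: "Sf = Gf"
proof -
  define P where "P = I0f * L1f - I1f * L0f"
  define d where "d = complex_of_real (2/pi)"
  have e1: "fps_X * fps_deriv P = I0f*(fps_X*fps_deriv L1f) + (fps_X*I1f)*L1f - ((fps_X*I1f)*fps_deriv L0f + (fps_X*fps_deriv I1f)*L0f)"
    by (simp add: P_def F1 algebra_simps)
  also have "\<dots> = - P - fps_const d * (fps_X*I1f)"
    unfolding F4 F2 F3 P_def d_def by (simp add: algebra_simps)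
  finally have e: "fps_X * fps_deriv P = - P - fps_const d * (fps_X*I1f)" .
  have dXP: "fps_deriv (fps_X * P) = P + fps_X * fps_deriv P" by (simp add: add.commute)
  have cd: "fps_const (complex_of_real pi / 2) * fps_const d = 1"
    by (simp add: d_def field_simps flip: fps_const_mult)
  have "fps_deriv Gf = I0f + fps_X * I1f + fps_const (complex_of_real pi / 2) * fps_deriv (fps_X * P)"
    unfolding Gf_def P_def[symmetric] by (simp add: F1 add.commute)
  also have "\<dots> = I0f + fps_X * I1f - (fps_const (complex_of_real pi / 2) * fps_const d) * (fps_X*I1f)"
    unfolding dXP e by (simp add: algebra_simps)
  also have "\<dots> = I0f" unfolding cd by simp
  finally have "fps_deriv Sf = fps_deriv Gf" by (simp add: F5)
  hence "Sf = fps_const (fps_nth Sf 0 - fps_nth Gf 0) + Gf" by (simp only: fps_deriv_eq_iff)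
  moreover have "fps_nth Sf 0 = 0" by (simp add: Sf_def sc_def)
  moreover have "fps_nth Gf 0 = 0" by (simp add: Gf_def)
  ultimately show ?thesis by simp
qed



lemma rad_mult: "fps_conv_radius f = \<infinity> \<Longrightarrow> fps_conv_radius g = \<infinity> \<Longrightarrow> fps_conv_radius (f * g) = \<infinity>"
  using fps_conv_radius_mult[of f g] by simp
lemma rad_diff: "fps_conv_radius f = \<infinity> \<Longrightarrow> fps_conv_radius g = \<infinity> \<Longrightarrow> fps_conv_radius (f - g) = \<infinity>"
  using fps_conv_radius_diff[of f g] by simp
lemma rad_add: "fps_conv_radius f = \<infinity> \<Longrightarrow> fps_conv_radius g = \<infinity> \<Longrightarrow> fps_conv_radius (f + g) = \<infinity>"
  using fps_conv_radius_add[of f g] by simp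

lemma ev_mult: fixes f g :: "complex fps" shows "fps_conv_radius f = \<infinity> \<Longrightarrow> fps_conv_radius g = \<infinity> \<Longrightarrow> eval_fps (f * g) z = eval_fps f z * eval_fps g z"
  by (rule eval_fps_mult) simp_all
lemma ev_diff: fixes f g :: "complex fps" shows "fps_conv_radius f = \<infinity> \<Longrightarrow> fps_conv_radius g = \<infinity> \<Longrightarrow> eval_fps (f - g) z = eval_fps f z - eval_fps g z"
  by (rule eval_fps_diff) simp_all
lemma ev_add: fixes f g :: "complex fps" shows "fps_conv_radius f = \<infinity> \<Longrightarrow> fps_conv_radius g = \<infinity> \<Longrightarrow> eval_fps (f + g) z = eval_fps f z + eval_fps g z"
  by (rule eval_fps_add) simp_all

lemma reidx:
  assumes "strict_mono g" "\<And>n. n \<notin> range g \<Longrightarrow> c n = 0"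
  shows "(\<Sum>k. c (g k) * y ^ (g k)) = eval_fps (Abs_fps c) y"
  using suminf_mono_reindex[of g "\<lambda>n. c n * y^n"] assms by (simp add: eval_fps_def)

lemma rng_even: "n \<notin> range (\<lambda>k::nat. 2*k) \<Longrightarrow> odd n" by (metis evenE rangeI)
lemma rng_odd: "n \<notin> range (\<lambda>k::nat. 2*k+1) \<Longrightarrow> even n" by (metis oddE rangeI)
lemma rng_even2: "n \<notin> range (\<lambda>k::nat. 2*k+2) \<Longrightarrow> odd n \<or> n = 0"
proof -
  assume a: "n \<notin> range (\<lambda>k::nat. 2*k+2)"
  { assume "even n" "n \<noteq> 0"
    then obtain j where "n = 2*j" "j \<noteq> 0" by auto
    then obtain k where "n = 2*k+2" by (metis not0_implies_Suc mult_Suc_right add.commute add_2_eq_Suc)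
    with a have False by auto }
  thus ?thesis by blast
qed

lemma ev_I0: "besselI0 y = eval_fps I0f y"
proof -
  have "besselI0 y = (\<Sum>k. i0c (2*k) * y^(2*k))" unfolding besselI0_def by (simp add: i0c_def)
  also have "\<dots> = eval_fps I0f y" unfolding I0f_def
    proof (rule reidx)
      show "n \<notin> range (\<lambda>k::nat. 2*k) \<Longrightarrow> i0c n = 0" for n by (drule rng_even) (auto simp: i0c_def)
    qed (simp add: strict_mono_def)
  finally show ?thesis .
qed

lemma ev_I1: "besselI1 y = eval_fps I1f y"
proof -
  have "besselI1 y = (\<Sum>k. i1c (2*k+1) * y^(2*k+1))" unfolding besselI1_def by (simp add: i1c_def power_divide)
  also have "\<dots> = eval_fps I1f y" unfolding I1f_def
    proof (rule reidx)
      show "n \<notin> range (\<lambda>k::nat. 2*k+1) \<Longrightarrow> i1c n = 0" for n by (drule rng_odd) (auto simp: i1c_def)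
    qed (simp add: strict_mono_def)
  finally show ?thesis .
qed

lemma ev_L0: "struveL0 y = eval_fps L0f y"
proof -
  have "struveL0 y = (\<Sum>k. l0c (2*k+1) * y^(2*k+1))" unfolding struveL0_def by (simp add: l0c_def power_divide)
  also have "\<dots> = eval_fps L0f y" unfolding L0f_def
    proof (rule reidx)
      show "n \<notin> range (\<lambda>k::nat. 2*k+1) \<Longrightarrow> l0c n = 0" for n by (drule rng_odd) (auto simp: l0c_def)
    qed (simp add: strict_mono_def)
  finally show ?thesis .
qed

lemma ev_L1: "struveL1 y = eval_fps L1f y"
proof -
  have "struveL1 y = (\<Sum>k. l1c (2*k+2) * y^(2*k+2))" unfolding struveL1_def by (simp add: l1c_def power_divide)
  also have "\<dots> = eval_fps L1f y" unfolding L1f_def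
    proof (rule reidx)
      show "n \<notin> range (\<lambda>k::nat. 2*k+2) \<Longrightarrow> l1c n = 0" for n by (drule rng_even2) (auto simp: l1c_def)
    qed (simp add: strict_mono_def)
  finally show ?thesis .
qed

lemma ev_S: fixes y :: complex shows "(\<Sum>n. y ^ (2*n+1) / (4 ^ n * of_nat (fact n) ^ 2 * of_nat (2*n+1))) = eval_fps Sf y"
proof -
  have "(\<Sum>n. y ^ (2*n+1) / (4 ^ n * of_nat (fact n) ^ 2 * of_nat (2*n+1))) = (\<Sum>k. sc (2*k+1) * y^(2*k+1))"
    by (simp add: sc_def)
  also have "\<dots> = eval_fps Sf y" unfolding Sf_def
    proof (rule reidx)
      show "n \<notin> range (\<lambda>k::nat. 2*k+1) \<Longrightarrow> sc n = 0" for n by (drule rng_odd) (auto simp: sc_def)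
    qed (simp add: strict_mono_def)
  finally show ?thesis .
qed

lemma summ_S: fixes y :: complex shows "summable (\<lambda>n. y ^ (2*n+1) / (4 ^ n * of_nat (fact n) ^ 2 * of_nat (2*n+1)))"
proof -
  have "summable (\<lambda>k. sc (2*k+1) * y^(2*k+1))"
  proof (subst summable_mono_reindex[of "\<lambda>k. 2*k+1" "\<lambda>n. sc n * y^n"])
    show "n \<notin> range (\<lambda>k::nat. 2*k+1) \<Longrightarrow> sc n * y ^ n = 0" for n by (drule rng_odd) (auto simp: sc_def)
  qed (simp_all add: strict_mono_def summ(5))
  thus ?thesis by (simp add: sc_def)
qed

lemma ev_G: "eval_fps Sf y = y * besselI0 y + of_real pi * y / 2 * (besselI0 y * struveL1 y - besselI1 y * struveL0 y)"
proof -
  have r: "fps_conv_radius (I0f * L1f - I1f * L0f) = \<infinity>"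
    by (intro rad_diff rad_mult) simp_all
  have "eval_fps Sf y = eval_fps Gf y" by (simp add: F8)
  also have "\<dots> = y * eval_fps I0f y + of_real pi / 2 * (y * (eval_fps I0f y * eval_fps L1f y - eval_fps I1f y * eval_fps L0f y))"
    unfolding Gf_def using r
    by (simp add: ev_add rad_mult ev_mult rad_add ev_diff)
  finally show ?thesis by (simp add: ev_I0 ev_I1 ev_L0 ev_L1 algebra_simps)
qed



definition Rt :: "complex \<Rightarrow> nat \<Rightarrow> complex" where
  "Rt y N = exp y - (\<Sum>k<N. y^k / fact k)"

lemma expR_Rt: "expR n y = Rt y (Suc n)"
  by (simp add: expR_def Rt_def lessThan_Suc_atMost)

lemma ps: "(\<Sum>n<N. bc n * expR n y) = (\<Sum>k<N. tc k * y^k) + (\<Sum>m<N. bc m) * Rt y N"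
proof (induction N)
  case 0 thus ?case by simp
next
  case (Suc N)
  have r: "Rt y N = Rt y (Suc N) + y^N / fact N" by (simp add: Rt_def)
  have t: "tc N = (\<Sum>m<N. bc m) / fact N" by (simp add: tc_def)
  have "(\<Sum>n<Suc N. bc n * expR n y) = (\<Sum>n<N. bc n * expR n y) + bc N * expR N y" by simp
  also have "\<dots> = (\<Sum>k<N. tc k * y^k) + (\<Sum>m<N. bc m) * Rt y N + bc N * Rt y (Suc N)"
    by (subst Suc.IH) (simp only: expR_Rt)
  also have "\<dots> = (\<Sum>k<N. tc k * y^k) + tc N * y^N + ((\<Sum>m<N. bc m) + bc N) * Rt y (Suc N)"
    unfolding r t by (simp add: algebra_simps)
  also have "\<dots> = (\<Sum>k<Suc N. tc k * y^k) + (\<Sum>m<Suc N. bc m) * Rt y (Suc N)" by simp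
  finally show ?case .
qed

lemma fscale: "(x::'a::{real_normed_field}) ^ n /\<^sub>R fact n = x ^ n / fact n"
  by (simp add: scaleR_conv_of_real divide_inverse mult.commute)

lemma Rt_sums: "(\<lambda>i. y^(i+N) / fact (i+N)) sums Rt y N"
proof -
  have "(\<lambda>n. y^n / fact n) sums exp y" using exp_converges[of y] by (simp only: fscale)
  hence "(\<lambda>n. y^n / fact n) sums (Rt y N + (\<Sum>i<N. y^i / fact i))" by (simp add: Rt_def)
  thus ?thesis by (subst sums_iff_shift)
qed

lemma rsums: "(\<lambda>i. (x::real)^(i+N) / fact (i+N)) sums (exp x - (\<Sum>k<N. x^k / fact k))"
proof -
  have "(\<lambda>n. x^n / fact n) sums exp x" using exp_converges[of x] by (simp only: fscale)
  hence "(\<lambda>n. x^n / fact n) sums ((exp x - (\<Sum>k<N. x^k / fact k)) + (\<Sum>i<N. x^i / fact i))" by simp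
  thus ?thesis by (subst sums_iff_shift)
qed

lemma Rt_bound: "norm (2^N * Rt y N) \<le> exp (2 * norm y) - (\<Sum>k<N. (2*norm y)^k / fact k)"
proof -
  have s: "(\<lambda>i. 2^N * (y^(i+N) / fact (i+N))) sums (2^N * Rt y N)"
    by (rule sums_mult) (rule Rt_sums)
  have "norm (suminf (\<lambda>i. 2^N * (y^(i+N) / fact (i+N)))) \<le> suminf (\<lambda>i. (2*norm y)^(i+N) / fact (i+N))"
  proof (rule norm_suminf_le)
    show "summable (\<lambda>i. (2*norm y)^(i+N) / fact (i+N))" using rsums sums_summable by blast
    fix i
    have "norm (2^N * (y^(i+N) / fact (i+N))) = 2^N * norm y^(i+N) / fact (i+N)"
      by (simp add: norm_mult norm_divide norm_power)
    also have "\<dots> \<le> 2^(i+N) * norm y^(i+N) / fact (i+N)"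
      by (intro divide_right_mono mult_right_mono power_increasing) auto
    also have "\<dots> = (2*norm y)^(i+N) / fact (i+N)" by (simp add: power_mult_distrib)
    finally show "norm (2^N * (y^(i+N) / fact (i+N))) \<le> (2*norm y)^(i+N) / fact (i+N)" .
  qed
  thus ?thesis using s rsums[of "2*norm y" N] by (simp add: sums_iff)
qed

lemma tail0: "(\<lambda>N. (\<Sum>m<N. bc m) * Rt y N) \<longlonglongrightarrow> 0"
proof (rule Lim_null_comparison)
  define x where "x = 2 * norm y"
  have "(\<lambda>N. \<Sum>k<N. x^k / fact k) \<longlonglongrightarrow> exp x"
    using exp_converges[of x] by (simp only: sums_def fscale)
  hence "(\<lambda>N. exp x - (\<Sum>k<N. x^k / fact k)) \<longlonglongrightarrow> exp x - exp x"
    by (intro tendsto_diff tendsto_const)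
  thus "(\<lambda>N. exp (2 * norm y) - (\<Sum>k<N. (2*norm y)^k / fact k)) \<longlonglongrightarrow> 0" by (simp add: x_def)
  show "\<forall>\<^sub>F N in sequentially. norm ((\<Sum>m<N. bc m) * Rt y N) \<le> exp (2 * norm y) - (\<Sum>k<N. (2*norm y)^k / fact k)"
  proof (intro always_eventually allI)
    fix N
    have "norm ((\<Sum>m<N. bc m) * Rt y N) = norm (\<Sum>m<N. bc m) * norm (Rt y N)" by (simp add: norm_mult)
    also have "\<dots> \<le> 2^N * norm (Rt y N)" by (intro mult_right_mono bnd_B) auto
    also have "\<dots> = norm (2^N * Rt y N)" by (simp add: norm_mult norm_power)
    also have "\<dots> \<le> exp (2 * norm y) - (\<Sum>k<N. (2*norm y)^k / fact k)" by (rule Rt_bound)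
    finally show "norm ((\<Sum>m<N. bc m) * Rt y N) \<le> exp (2 * norm y) - (\<Sum>k<N. (2*norm y)^k / fact k)" .
  qed
qed

lemma main_sums: "(\<lambda>n. bc n * expR n y) sums eval_fps Tf y"
proof -
  have "(\<lambda>n. tc n * y^n) sums eval_fps Tf y"
  proof -
    have "(\<lambda>n. fps_nth Tf n * y^n) sums eval_fps Tf y" by (rule sums_eval_fps) simp
    thus ?thesis by (simp add: Tf_def)
  qed
  hence "(\<lambda>N. (\<Sum>k<N. tc k * y^k) + (\<Sum>m<N. bc m) * Rt y N) \<longlonglongrightarrow> eval_fps Tf y + 0"
    unfolding sums_def by (intro tendsto_add tail0)
  thus ?thesis unfolding sums_def ps by simp
qed

lemma ev_T: "eval_fps Tf y = exp y * eval_fps Sf y"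
  by (simp add: F7 ev_mult)

theorem mainTheorem14:
  fixes y :: complex
  shows "summable (\<lambda>n. y ^ (2*n+1) / (4 ^ n * of_nat (fact n) ^ 2 * of_nat (2*n+1)))
    \<and> (\<lambda>n. of_nat (2*n choose n) / 2 ^ n * expR n y) sums
        (exp y * (\<Sum>n. y ^ (2*n+1) / (4 ^ n * of_nat (fact n) ^ 2 * of_nat (2*n+1))))
    \<and> exp y * (\<Sum>n. y ^ (2*n+1) / (4 ^ n * of_nat (fact n) ^ 2 * of_nat (2*n+1)))
        = exp y * (y * besselI0 y + of_real pi * y / 2 *
            (besselI0 y * struveL1 y - besselI1 y * struveL0 y))"
proof -
  have f: "(\<lambda>n. of_nat (2*n choose n) / 2 ^ n * expR n y) = (\<lambda>n. bc n * expR n y)"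
    by (simp add: bc_def)
  have 2: "(\<lambda>n. of_nat (2*n choose n) / 2 ^ n * expR n y) sums (exp y * eval_fps Sf y)"
    unfolding f using main_sums[of y] by (simp only: ev_T)
  show ?thesis unfolding ev_S using summ_S[of y] 2 ev_G[of y] by simp
qed

end
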